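(* Let $V$ be a real symmetric $d\times d$ matrix and $W$ a complex Hermitian $d\times d$ matrix such that $V\ge W$ (i.e. $V-W$ is positive semidefinite). Then $$\mathrm{tr}\,V\;\ge\;\mathrm{tr}\,\mathrm{Re}\,W+\mathrm{tr}\,|\mathrm{Im}\,W|.$$
   Context: For a complex matrix $W$, $\bar W$ denotes the entrywise complex conjugate, $\mathrm{Re}\,W=(W+\bar W)/2$ and $\mathrm{Im}\,W=(W-\bar W)/(2i)$; for a Hermitian $W$, $\mathrm{Re}\,W$ is real symmetric and $\mathrm{Im}\,W$ is real antisymmetric. For any matrix $A$, $|A|=(A^*A)^{1/2}$. *)

theory Defs
  imports "HOL-Analysis.Analysis"
begin

definition cnj_mat :: "complex^'d^'d \<Rightarrow> complex^'d^'d" where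
  "cnj_mat W = (\<chi> i j. cnj (W $ i $ j))"

definition adjoint_mat :: "complex^'d^'d \<Rightarrow> complex^'d^'d" where
  "adjoint_mat W = transpose (cnj_mat W)"

definition hermitian_mat :: "complex^'d^'d \<Rightarrow> bool" where
  "hermitian_mat W \<longleftrightarrow> adjoint_mat W = W"

definition psd_cmat :: "complex^'d^'d \<Rightarrow> bool" where
  "psd_cmat A \<longleftrightarrow> hermitian_mat A \<and>
     (\<forall>x::complex^'d. Re (\<Sum>i\<in>UNIV. \<Sum>j\<in>UNIV. cnj (x $ i) * A $ i $ j * x $ j) \<ge> 0)"

definition symmetric_mat :: "real^'d^'d \<Rightarrow> bool" where
  "symmetric_mat V \<longleftrightarrow> transpose V = V"

definition psd_rmat :: "real^'d^'d \<Rightarrow> bool" where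
  "psd_rmat A \<longleftrightarrow> symmetric_mat A \<and> (\<forall>x::real^'d. x \<bullet> (A *v x) \<ge> 0)"

definition cmat_of_rmat :: "real^'d^'d \<Rightarrow> complex^'d^'d" where
  "cmat_of_rmat V = (\<chi> i j. complex_of_real (V $ i $ j))"

definition Re_mat :: "complex^'d^'d \<Rightarrow> real^'d^'d" where
  "Re_mat W = (\<chi> i j. Re (W $ i $ j))"

definition Im_mat :: "complex^'d^'d \<Rightarrow> real^'d^'d" where
  "Im_mat W = (\<chi> i j. Im (W $ i $ j))"

text \<open>|A| = (A^* A)^{1/2}: the unique positive semidefinite square root of A^T A.\<close>
definition abs_mat :: "real^'d^'d \<Rightarrow> real^'d^'d" where
  "abs_mat A = (THE B. psd_rmat B \<and> B ** B = transpose A ** A)"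

end

theory Submission
  imports Defs
begin


lemma inner_transpose: "x \<bullet> ((A::real^'n^'n) *v y) = (transpose A *v x) \<bullet> y"
  by (metis dot_lmul_matrix inner_commute transpose_matrix_vector)

lemma inner_sym: "transpose (A::real^'n^'n) = A \<Longrightarrow> x \<bullet> (A *v y) = (A *v x) \<bullet> y"
  by (metis inner_transpose)

lemma quad_expand:
  fixes R :: "real^'n^'n"
  assumes "transpose R = R"
  shows "(x + t *\<^sub>R y) \<bullet> (R *v (x + t *\<^sub>R y)) = x \<bullet> (R *v x) + 2 * t * (y \<bullet> (R *v x)) + t^2 * (y \<bullet> (R *v y))"
proof -
  have "x \<bullet> (R *v y) = y \<bullet> (R *v x)" using inner_sym[OF assms, of x y] by (simp add: inner_commute)
  then show ?thesis
    by (simp add: matrix_vector_right_distrib matrix_vector_mult_scaleR inner_add_left inner_add_right power2_eq_square algebra_simps)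
qed

lemma psd_zero_form:
  fixes R :: "real^'n^'n"
  assumes sym: "transpose R = R" and U: "subspace U"
    and pos: "\<And>z. z \<in> U \<Longrightarrow> z \<bullet> (R *v z) \<ge> 0"
    and x: "x \<in> U" and y: "y \<in> U" and x0: "x \<bullet> (R *v x) = 0"
  shows "y \<bullet> (R *v x) = 0"
proof (rule ccontr)
  define a where "a = y \<bullet> (R *v x)"
  define c where "c = y \<bullet> (R *v y)"
  assume "y \<bullet> (R *v x) \<noteq> 0"
  then have a0: "a \<noteq> 0" by (simp add: a_def)
  have c0: "c \<ge> 0" using pos[OF y] by (simp add: c_def)
  define t where "t = - a / (c + 1)"
  have "x + t *\<^sub>R y \<in> U" using U x y by (simp add: subspace_add subspace_scale)
  then have "0 \<le> 2 * t * a + t^2 * c"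
    using pos[of "x + t *\<^sub>R y"] quad_expand[OF sym, of x t y] x0 by (simp add: a_def c_def)
  also have "2 * t * a + t^2 * c = a^2 * (1/(c+1)) * (c/(c+1) - 2)"
    by (simp add: t_def power2_eq_square algebra_simps)
  also have "\<dots> < 0"
  proof -
    have "c/(c+1) < 1" using c0 by simp
    moreover have "a^2 * (1/(c+1)) > 0" using a0 c0 by simp
    ultimately show ?thesis using mult_pos_neg[of "a^2 * (1/(c+1))" "c/(c+1) - 2"] by linarith
  qed
  finally show False by simp
qed



lemma eig_in_subspace:
  fixes A :: "real^'n^'n"
  assumes sym: "transpose A = A" and U: "subspace U" and ne: "y \<in> U" "y \<noteq> 0"
    and inv: "\<And>z. z \<in> U \<Longrightarrow> A *v z \<in> U"
  obtains x where "x \<in> U" "norm x = 1" "A *v x = (x \<bullet> (A *v x)) *\<^sub>R x"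
proof -
  define K where "K = U \<inter> sphere 0 1"
  have cK: "compact K" unfolding K_def
    by (intro closed_Int_compact closed_subspace U compact_sphere)
  have "y /\<^sub>R norm y \<in> K" using ne U by (simp add: K_def subspace_scale)
  then have neK: "K \<noteq> {}" by blast
  have cont: "continuous_on K (\<lambda>x. x \<bullet> (A *v x))"
    by (intro continuous_intros linear_continuous_on matrix_vector_mul_linear)
  obtain x where xK: "x \<in> K" and xmax: "\<And>z. z \<in> K \<Longrightarrow> z \<bullet> (A *v z) \<le> x \<bullet> (A *v x)"
    using continuous_attains_sup[OF cK neK cont] by blast
  define l where "l = x \<bullet> (A *v x)"
  define R where "R = l *\<^sub>R mat 1 - A"
  have Rv: "R *v z = l *\<^sub>R z - A *v z" for z
    by (simp add: R_def matrix_vector_mult_diff_rdistrib scaleR_matrix_vector_assoc[symmetric])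
  have symR: "transpose R = R"
    using sym by (simp add: R_def transpose_def vec_eq_iff mat_def)
  have pos: "z \<bullet> (R *v z) \<ge> 0" if z: "z \<in> U" for z
  proof (cases "z = 0")
    case True then show ?thesis by simp
  next
    case False
    have "z /\<^sub>R norm z \<in> K" using False z U by (simp add: K_def subspace_scale)
    then have "(z /\<^sub>R norm z) \<bullet> (A *v (z /\<^sub>R norm z)) \<le> l" using xmax l_def by blast
    then have "(z \<bullet> (A *v z)) / (norm z)^2 \<le> l"
      by (simp add: matrix_vector_mult_scaleR power2_eq_square divide_inverse mult.commute mult.left_commute)
    then have "z \<bullet> (A *v z) \<le> l * (norm z)^2" using False by (simp add: divide_le_eq)
    then show ?thesis by (simp add: Rv inner_diff_right power2_norm_eq_inner)
  qed
  have xU: "x \<in> U" and nx: "norm x = 1" using xK by (auto simp: K_def)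
  have x0: "x \<bullet> (R *v x) = 0"
    using nx by (simp add: Rv inner_diff_right l_def power2_norm_eq_inner[symmetric])
  have RxU: "R *v x \<in> U" using xU inv U by (simp add: Rv subspace_diff subspace_scale)
  have "(R *v x) \<bullet> (R *v x) = 0"
    by (rule psd_zero_form[OF symR U pos xU RxU x0])
  then have "R *v x = 0" by simp
  then have "A *v x = l *\<^sub>R x" by (simp add: Rv)
  then show ?thesis using that xU nx l_def by blast
qed



definition onset :: "(real^'n) set \<Rightarrow> bool" where
  "onset E \<longleftrightarrow> finite E \<and> (\<forall>e\<in>E. e \<bullet> e = 1) \<and> (\<forall>e\<in>E. \<forall>f\<in>E. e \<noteq> f \<longrightarrow> e \<bullet> f = 0)"

lemma spectral_aux:
  fixes A :: "real^'n^'n"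
  assumes sym: "transpose A = A"
  shows "k \<le> CARD('n) \<Longrightarrow> \<exists>E. onset E \<and> card E = k \<and> (\<forall>e\<in>E. A *v e = (e \<bullet> (A *v e)) *\<^sub>R e)"
proof (induction k)
  case 0
  then show ?case by (intro exI[of _ "{}"]) (simp add: onset_def)
next
  case (Suc k)
  then obtain E where E: "onset E" "card E = k" and eig: "\<forall>e\<in>E. A *v e = (e \<bullet> (A *v e)) *\<^sub>R e"
    by auto
  have fin: "finite E" using E by (simp add: onset_def)
  have "dim E \<le> card E" using dim_le_card[OF span_superset fin] .
  then have "dim E < DIM(real^'n)" using Suc.prems E by simp
  then obtain y where y0: "y \<noteq> 0" and yo: "\<And>z. z \<in> span E \<Longrightarrow> orthogonal y z"
    using orthogonal_to_subspace_exists by blast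
  define U where "U = {z. \<forall>e\<in>E. orthogonal e z}"
  have U: "subspace U" unfolding U_def by (rule subspace_orthogonal_to_vectors)
  have yU: "y \<in> U" using yo span_base by (auto simp: U_def orthogonal_commute)
  have inv: "A *v z \<in> U" if "z \<in> U" for z
  proof -
    have "e \<bullet> (A *v z) = 0" if e: "e \<in> E" for e
    proof -
      have "e \<bullet> (A *v z) = (A *v e) \<bullet> z" by (rule inner_sym[OF sym])
      also have "\<dots> = (e \<bullet> (A *v e)) * (e \<bullet> z)" using eig e by (metis inner_scaleR_left)
      also have "e \<bullet> z = 0" using \<open>z \<in> U\<close> e by (auto simp: U_def orthogonal_def)
      finally show ?thesis by simp
    qed
    then show ?thesis by (auto simp: U_def orthogonal_def)
  qed
  obtain x where xU: "x \<in> U" and nx: "norm x = 1" and ex: "A *v x = (x \<bullet> (A *v x)) *\<^sub>R x"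
    using eig_in_subspace[OF sym U yU y0 inv] by blast
  have xx: "x \<bullet> x = 1" using nx by (simp add: norm_eq_1)
  have xE: "x \<notin> E"
  proof
    assume "x \<in> E" then have "x \<bullet> x = 0" using xU by (auto simp: U_def orthogonal_def)
    then show False using xx by simp
  qed
  have "onset (insert x E)"
    using E xx xU unfolding onset_def U_def orthogonal_def
    by (auto simp: inner_commute)
  moreover have "card (insert x E) = Suc k" using fin xE E by simp
  ultimately show ?case using eig ex by (intro exI[of _ "insert x E"]) auto
qed

lemma onset_expand:
  fixes E :: "(real^'n) set"
  assumes E: "onset E" and c: "card E = CARD('n)"
  shows "z = (\<Sum>e\<in>E. (e \<bullet> z) *\<^sub>R e)"
proof -
  have fin: "finite E" and n1: "\<And>e. e\<in>E \<Longrightarrow> e \<bullet> e = 1"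
    and orth: "\<And>e f. e\<in>E \<Longrightarrow> f\<in>E \<Longrightarrow> e \<noteq> f \<Longrightarrow> e \<bullet> f = 0"
    using E by (auto simp: onset_def)
  have ind: "independent E"
  proof (rule pairwise_orthogonal_independent)
    show "pairwise orthogonal E" using orth by (auto simp: pairwise_def orthogonal_def)
    show "0 \<notin> E" using n1 by force
  qed
  have sp: "UNIV \<subseteq> span E"
    using card_eq_dim[of E UNIV] ind fin c by simp
  define r where "r = z - (\<Sum>e\<in>E. (e \<bullet> z) *\<^sub>R e)"
  have "orthogonal r f" if f: "f \<in> E" for f
  proof -
    have "(\<Sum>e\<in>E. (e \<bullet> z) * (f \<bullet> e)) = (f \<bullet> z) * (f \<bullet> f)"
      using fin f by (subst sum.remove[of E f]) (auto intro!: sum.neutral simp: orth inner_commute)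
    moreover have "r \<bullet> f = z \<bullet> f - (\<Sum>e\<in>E. (e \<bullet> z) * (f \<bullet> e))"
      unfolding r_def inner_diff_left inner_sum_left inner_scaleR_left by (simp add: inner_commute)
    ultimately show ?thesis using f n1
      by (simp add: orthogonal_def inner_commute)
  qed
  then have "orthogonal r r" using orthogonal_to_span sp orthogonal_commute by blast
  then show ?thesis by (simp add: r_def orthogonal_def)
qed

lemma onset_delta:
  fixes E :: "(real^'n) set"
  assumes E: "onset E" and c: "card E = CARD('n)"
  shows "(\<Sum>e\<in>E. e $ i * e $ j) = (if i = j then 1 else 0)"
proof -
  have "axis j 1 = (\<Sum>e\<in>E. (e \<bullet> axis j 1) *\<^sub>R e)" by (rule onset_expand[OF E c])
  then have "(axis j (1::real)) $ i = (\<Sum>e\<in>E. (e \<bullet> axis j 1) *\<^sub>R e) $ i" by simp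
  also have "\<dots> = (\<Sum>e\<in>E. e$i * e$j)" by (simp add: inner_axis mult.commute)
  finally show ?thesis by (simp add: axis_def)
qed

lemma spectral:
  fixes A :: "real^'n^'n"
  assumes sym: "transpose A = A"
  obtains E where "onset E" "card E = CARD('n)" "\<And>e. e\<in>E \<Longrightarrow> A *v e = (e \<bullet> (A *v e)) *\<^sub>R e"
  using spectral_aux[OF sym, of "CARD('n)"] by auto



definition osum :: "(real^'n) set \<Rightarrow> (real^'n \<Rightarrow> real) \<Rightarrow> real^'n^'n" where
  "osum E c = (\<chi> i j. \<Sum>e\<in>E. c e * e $ i * e $ j)"

lemma osum_mult: "finite E \<Longrightarrow> osum E c *v x = (\<Sum>e\<in>E. (c e * (e \<bullet> x)) *\<^sub>R e)"
proof -
  have *: "(\<Sum>j\<in>UNIV. (\<Sum>e\<in>E. c e * e $ i * e $ j) * x $ j) = (\<Sum>e\<in>E. c e * (\<Sum>j\<in>UNIV. e $ j * x $ j) * e $ i)" for i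
  proof -
    have "(\<Sum>j\<in>UNIV. (\<Sum>e\<in>E. c e * e $ i * e $ j) * x $ j) = (\<Sum>j\<in>UNIV. \<Sum>e\<in>E. c e * e $ i * e $ j * x $ j)"
      by (simp add: sum_distrib_right)
    also have "\<dots> = (\<Sum>e\<in>E. \<Sum>j\<in>UNIV. c e * e $ i * e $ j * x $ j)" by (rule sum.swap)
    also have "\<dots> = (\<Sum>e\<in>E. c e * (\<Sum>j\<in>UNIV. e $ j * x $ j) * e $ i)"
      by (simp add: sum_distrib_left sum_distrib_right mult_ac)
    finally show ?thesis .
  qed
  show ?thesis
  proof (rule vec_eq_iff[THEN iffD2], rule allI)
    fix i
    have "(osum E c *v x) $ i = (\<Sum>j\<in>UNIV. (\<Sum>e\<in>E. c e * e $ i * e $ j) * x $ j)"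
      by (simp add: osum_def matrix_vector_mult_def)
    also have "\<dots> = (\<Sum>e\<in>E. c e * (\<Sum>j\<in>UNIV. e $ j * x $ j) * e $ i)" by (rule *)
    also have "\<dots> = (\<Sum>e\<in>E. (c e * (e \<bullet> x)) *\<^sub>R e) $ i"
      unfolding sum_component by (simp add: inner_vec_def)
    finally show "(osum E c *v x) $ i = (\<Sum>e\<in>E. (c e * (e \<bullet> x)) *\<^sub>R e) $ i" .
  qed
qed

lemma osum_transpose: "transpose (osum E c) = osum E c"
  by (simp add: osum_def transpose_def vec_eq_iff mult.commute mult.left_commute)

lemma osum_trace: "trace (osum E c) = (\<Sum>e\<in>E. c e * (e \<bullet> e))"
proof -
  have "trace (osum E c) = (\<Sum>i\<in>UNIV. \<Sum>e\<in>E. c e * e $ i * e $ i)"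
    by (simp add: osum_def trace_def)
  also have "\<dots> = (\<Sum>e\<in>E. \<Sum>i\<in>UNIV. c e * e $ i * e $ i)" by (rule sum.swap)
  also have "\<dots> = (\<Sum>e\<in>E. c e * (e \<bullet> e))"
    by (simp add: inner_vec_def sum_distrib_left mult.assoc)
  finally show ?thesis .
qed

lemma osum_eig:
  assumes E: "onset E" and f: "f \<in> E"
  shows "osum E c *v f = c f *\<^sub>R f"
proof -
  have fin: "finite E" using E by (simp add: onset_def)
  have "osum E c *v f = (\<Sum>e\<in>E. (c e * (e \<bullet> f)) *\<^sub>R e)" by (rule osum_mult[OF fin])
  also have "\<dots> = (c f * (f \<bullet> f)) *\<^sub>R f"
    using fin f E by (subst sum.remove[of E f]) (auto intro!: sum.neutral simp: onset_def)
  also have "\<dots> = c f *\<^sub>R f" using E f by (simp add: onset_def)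
  finally show ?thesis .
qed

lemma osum_quad: "finite E \<Longrightarrow> x \<bullet> (osum E c *v x) = (\<Sum>e\<in>E. c e * (e \<bullet> x)^2)"
  by (simp add: osum_mult inner_sum_right power2_eq_square inner_commute[of x] mult.assoc)

lemma osum_psd: "finite E \<Longrightarrow> (\<And>e. e \<in> E \<Longrightarrow> c e \<ge> 0) \<Longrightarrow> psd_rmat (osum E c)"
  unfolding psd_rmat_def symmetric_mat_def
  by (simp add: osum_transpose osum_quad sum_nonneg)

lemma mv_sum: "(A::real^'n^'m) *v (\<Sum>e\<in>E. f e) = (\<Sum>e\<in>E. A *v f e)"
  by (induction E rule: infinite_finite_induct) (simp_all add: matrix_vector_right_distrib)

lemma osum_spectral:
  fixes A :: "real^'n^'n"
  assumes E: "onset E" "card E = CARD('n)" and eig: "\<And>e. e\<in>E \<Longrightarrow> A *v e = (e \<bullet> (A *v e)) *\<^sub>R e"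
  shows "A = osum E (\<lambda>e. e \<bullet> (A *v e))"
proof -
  have fin: "finite E" using E by (simp add: onset_def)
  have "A *v x = osum E (\<lambda>e. e \<bullet> (A *v e)) *v x" for x
  proof -
    have "A *v x = A *v (\<Sum>e\<in>E. (e \<bullet> x) *\<^sub>R e)" by (rule arg_cong[where f="(*v) A"], rule onset_expand[OF E])
    also have "\<dots> = (\<Sum>e\<in>E. (e \<bullet> x) *\<^sub>R (A *v e))"
      unfolding mv_sum matrix_vector_mult_scaleR ..
    also have "\<dots> = (\<Sum>e\<in>E. ((e \<bullet> (A *v e)) * (e \<bullet> x)) *\<^sub>R e)"
    proof (rule sum.cong[OF refl])
      fix e assume e: "e \<in> E"
      show "(e \<bullet> x) *\<^sub>R (A *v e) = ((e \<bullet> (A *v e)) * (e \<bullet> x)) *\<^sub>R e"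
        by (subst eig[OF e]) (simp add: mult.commute)
    qed
    also have "\<dots> = osum E (\<lambda>e. e \<bullet> (A *v e)) *v x" by (simp add: osum_mult[OF fin])
    finally show ?thesis .
  qed
  then show ?thesis by (subst matrix_eq) blast
qed



lemma psd_kernel:
  assumes P: "psd_rmat P" and x0: "x \<bullet> (P *v x) = 0"
  shows "P *v x = 0"
proof -
  have sym: "transpose P = P" and pos: "\<And>z. z \<bullet> (P *v z) \<ge> 0"
    using P by (auto simp: psd_rmat_def symmetric_mat_def)
  have "(P *v x) \<bullet> (P *v x) = 0"
    by (rule psd_zero_form[OF sym subspace_UNIV pos UNIV_I UNIV_I x0])
  then show ?thesis by simp
qed

lemma psd_sqrt_unique:
  fixes P Q :: "real^'n^'n"
  assumes P: "psd_rmat P" and Q: "psd_rmat Q" and eq: "P ** P = Q ** Q"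
  shows "P = Q"
proof -
  have symP: "transpose P = P" and posP: "\<And>z. z \<bullet> (P *v z) \<ge> 0"
    using P by (auto simp: psd_rmat_def symmetric_mat_def)
  have symQ: "transpose Q = Q" and posQ: "\<And>z. z \<bullet> (Q *v z) \<ge> 0"
    using Q by (auto simp: psd_rmat_def symmetric_mat_def)
  define D where "D = Q - P"
  have symD: "transpose D = D" using symP symQ
    by (simp add: D_def transpose_def vec_eq_iff)
  obtain E where E: "onset E" "card E = CARD('n)"
    and eig: "\<And>e. e\<in>E \<Longrightarrow> D *v e = (e \<bullet> (D *v e)) *\<^sub>R e"
    using spectral[OF symD] by blast
  have fin: "finite E" using E by (simp add: onset_def)
  have mu0: "e \<bullet> (D *v e) = 0" if e: "e \<in> E" for e
  proof (rule ccontr)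
    define m where "m = e \<bullet> (D *v e)"
    assume "e \<bullet> (D *v e) \<noteq> 0"
    then have m0: "m \<noteq> 0" by (simp add: m_def)
    have ee: "e \<bullet> e = 1" using E e by (simp add: onset_def)
    have Qe: "Q *v e = P *v e + m *\<^sub>R e"
      using eig[OF e] by (simp add: D_def m_def matrix_vector_mult_diff_rdistrib algebra_simps)
    have "e \<bullet> (Q *v (Q *v e)) = e \<bullet> (P *v (P *v e))"
      using eq by (simp add: matrix_vector_mul_assoc)
    moreover have "e \<bullet> (Q *v (Q *v e)) = (P *v e) \<bullet> (P *v e) + m * (e \<bullet> (P *v e)) + m * (e \<bullet> (Q *v e))"
    proof -
      have "e \<bullet> (Q *v (Q *v e)) = e \<bullet> (Q *v (P *v e)) + m * (e \<bullet> (Q *v e))"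
        by (simp add: Qe[symmetric, THEN sym] matrix_vector_right_distrib matrix_vector_mult_scaleR inner_add_right)
      also have "e \<bullet> (Q *v (P *v e)) = (Q *v e) \<bullet> (P *v e)" by (rule inner_sym[OF symQ])
      also have "\<dots> = (P *v e) \<bullet> (P *v e) + m * (e \<bullet> (P *v e))"
        by (simp add: Qe inner_add_left)
      finally show ?thesis .
    qed
    moreover have "e \<bullet> (P *v (P *v e)) = (P *v e) \<bullet> (P *v e)" by (rule inner_sym[OF symP])
    ultimately have "m * ((e \<bullet> (P *v e)) + (e \<bullet> (Q *v e))) = 0" by (simp add: algebra_simps)
    then have "(e \<bullet> (P *v e)) + (e \<bullet> (Q *v e)) = 0" using m0 by simp
    then have "e \<bullet> (P *v e) = 0" "e \<bullet> (Q *v e) = 0" using posP[of e] posQ[of e] by linarith+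
    then have "P *v e = 0" "Q *v e = 0" using psd_kernel P Q by blast+
    then have "m *\<^sub>R e = 0" using Qe by simp
    then show False using m0 ee by auto
  qed
  have "D *v x = 0 *v x" for x
  proof -
    have Deq: "D = osum E (\<lambda>e. e \<bullet> (D *v e))" by (rule osum_spectral[OF E eig])
    have "D *v x = osum E (\<lambda>e. e \<bullet> (D *v e)) *v x"
      by (rule arg_cong[where f="\<lambda>M. M *v x"], rule Deq)
    also have "\<dots> = (\<Sum>e\<in>E. ((e \<bullet> (D *v e)) * (e \<bullet> x)) *\<^sub>R e)"
      by (rule osum_mult[OF fin])
    also have "\<dots> = 0" by (rule sum.neutral) (simp add: mu0)
    finally show ?thesis by simp
  qed
  then have "D = 0" by (subst matrix_eq) blast
  then show ?thesis by (simp add: D_def)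
qed



lemma abs_mat_trace:
  fixes K :: "real^'n^'n"
  obtains E where "onset E" "card E = CARD('n)"
    "\<And>e. e \<in> E \<Longrightarrow> transpose K *v (K *v e) = ((K *v e) \<bullet> (K *v e)) *\<^sub>R e"
    "trace (abs_mat K) = (\<Sum>e\<in>E. sqrt ((K *v e) \<bullet> (K *v e)))"
proof -
  define C where "C = transpose K ** K"
  have symC: "transpose C = C" by (simp add: C_def matrix_transpose_mul)
  have Cv: "C *v y = transpose K *v (K *v y)" for y by (simp add: C_def matrix_vector_mul_assoc)
  have Cq: "y \<bullet> (C *v y) = (K *v y) \<bullet> (K *v y)" for y
    unfolding Cv by (subst inner_transpose) (simp only: transpose_transpose)
  obtain E where E: "onset E" "card E = CARD('n)"
    and eig: "\<And>e. e\<in>E \<Longrightarrow> C *v e = (e \<bullet> (C *v e)) *\<^sub>R e"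
    using spectral[OF symC] by blast
  have fin: "finite E" using E by (simp add: onset_def)
  define l where "l e = (K *v e) \<bullet> (K *v e)" for e
  have eig2: "C *v e = l e *\<^sub>R e" if "e \<in> E" for e
    using eig[OF that] by (simp add: Cq l_def)
  have Ceq: "C = osum E (\<lambda>e. e \<bullet> (C *v e))" by (rule osum_spectral[OF E eig])
  have Ceq2: "C = osum E l"
    using Ceq by (simp add: Cq l_def[abs_def])
  define P where "P = osum E (\<lambda>e. sqrt (l e))"
  have Ppsd: "psd_rmat P" unfolding P_def by (rule osum_psd[OF fin]) (simp add: l_def)
  have PP: "P ** P = C"
  proof -
    have "(P ** P) *v x = C *v x" for x
    proof -
      have "(P ** P) *v x = P *v (P *v x)" by (simp add: matrix_vector_mul_assoc)
      also have "P *v x = (\<Sum>e\<in>E. (sqrt (l e) * (e \<bullet> x)) *\<^sub>R e)" by (simp add: P_def osum_mult[OF fin])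
      also have "P *v \<dots> = (\<Sum>e\<in>E. (sqrt (l e) * (e \<bullet> x)) *\<^sub>R (P *v e))"
        unfolding mv_sum matrix_vector_mult_scaleR ..
      also have "\<dots> = (\<Sum>e\<in>E. (l e * (e \<bullet> x)) *\<^sub>R e)"
      proof (rule sum.cong[OF refl])
        fix e assume e: "e \<in> E"
        have "P *v e = sqrt (l e) *\<^sub>R e" unfolding P_def by (rule osum_eig[OF E(1) e])
        moreover have "sqrt (l e) * sqrt (l e) = l e" by (simp add: l_def)
        ultimately show "(sqrt (l e) * (e \<bullet> x)) *\<^sub>R (P *v e) = (l e * (e \<bullet> x)) *\<^sub>R e"
          by (simp add: algebra_simps)
      qed
      also have "\<dots> = osum E l *v x" by (rule osum_mult[OF fin, symmetric])
      also have "\<dots> = C *v x" using Ceq2 by simp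
      finally show ?thesis .
    qed
    then show ?thesis by (subst matrix_eq) blast
  qed
  have "abs_mat K = P"
    unfolding abs_mat_def
  proof (rule the_equality)
    show "psd_rmat P \<and> P ** P = transpose K ** K" using Ppsd PP by (simp add: C_def)
    fix B assume "psd_rmat B \<and> B ** B = transpose K ** K"
    then show "B = P" using psd_sqrt_unique[of B P] Ppsd PP by (simp add: C_def)
  qed
  moreover have "trace P = (\<Sum>e\<in>E. sqrt (l e))"
    unfolding P_def osum_trace using E by (simp add: onset_def)
  ultimately show ?thesis using that E eig2 by (simp add: l_def Cv)
qed





lemma onset_trace:
  fixes S :: "real^'n^'n"
  assumes E: "onset E" "card E = CARD('n)"
  shows "(\<Sum>b\<in>E. b \<bullet> (S *v b)) = trace S"
proof -
  have "(\<Sum>b\<in>E. b \<bullet> (S *v b)) = (\<Sum>b\<in>E. \<Sum>i\<in>UNIV. \<Sum>j\<in>UNIV. S$i$j * (b$i * b$j))"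
    by (simp add: inner_vec_def matrix_vector_mult_def sum_distrib_left mult_ac)
  also have "\<dots> = (\<Sum>i\<in>UNIV. \<Sum>b\<in>E. \<Sum>j\<in>UNIV. S$i$j * (b$i * b$j))" by (rule sum.swap)
  also have "\<dots> = (\<Sum>i\<in>UNIV. \<Sum>j\<in>UNIV. \<Sum>b\<in>E. S$i$j * (b$i * b$j))" by (simp add: sum.swap[of _ E])
  also have "\<dots> = (\<Sum>i\<in>UNIV. \<Sum>j\<in>UNIV. S$i$j * (if i = j then 1 else 0))"
    by (simp add: sum_distrib_left[symmetric] onset_delta[OF E])
  also have "\<dots> = trace S" unfolding trace_def
    by (rule sum.cong[OF refl]) (simp add: if_distrib[of "\<lambda>t. S$_$_ * t"] cong: if_cong)
  finally show ?thesis .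
qed



lemma quad_sum: "(u::real^'n) \<bullet> (A *v v) = (\<Sum>i\<in>UNIV. \<Sum>j\<in>UNIV. u$i * (A$i$j * v$j))"
  by (simp add: inner_vec_def matrix_vector_mult_def sum_distrib_left)

lemma term_eq:
  "Re (cnj (Complex a b) * (complex_of_real r - w) * Complex c d) =
   a * ((r - Re w) * c) + b * ((r - Re w) * d) + a * (Im w * d) - b * (Im w * c)"
  by (cases w) (simp add: algebra_simps)

lemma form_ineq:
  fixes V :: "real^'d^'d" and W :: "complex^'d^'d"
  assumes "psd_cmat (cmat_of_rmat V - W)"
  shows "0 \<le> u \<bullet> ((V - Re_mat W) *v u) + v \<bullet> ((V - Re_mat W) *v v) + u \<bullet> (Im_mat W *v v) - v \<bullet> (Im_mat W *v u)"
proof -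
  define x :: "complex^'d" where "x = (\<chi> i. Complex (u$i) (v$i))"
  have "0 \<le> Re (\<Sum>i\<in>UNIV. \<Sum>j\<in>UNIV. cnj (x $ i) * (cmat_of_rmat V - W) $ i $ j * x $ j)"
    using assms by (simp add: psd_cmat_def)
  also have "\<dots> = (\<Sum>i\<in>UNIV. \<Sum>j\<in>UNIV. u$i * ((V - Re_mat W)$i$j * u$j) + v$i * ((V - Re_mat W)$i$j * v$j)
        + u$i * (Im_mat W $i$j * v$j) - v$i * (Im_mat W $i$j * u$j))"
    unfolding Re_sum
  proof (intro sum.cong refl)
    fix i j
    have xi: "x $ k = Complex (u$k) (v$k)" for k by (simp add: x_def)
    show "Re (cnj (x $ i) * (cmat_of_rmat V - W) $ i $ j * x $ j) =
      u$i * ((V - Re_mat W)$i$j * u$j) + v$i * ((V - Re_mat W)$i$j * v$j)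
        + u$i * (Im_mat W $i$j * v$j) - v$i * (Im_mat W $i$j * u$j)"
      unfolding xi vector_minus_component cmat_of_rmat_def Re_mat_def Im_mat_def vec_lambda_beta
      by (rule term_eq)
  qed
  also have "\<dots> = u \<bullet> ((V - Re_mat W) *v u) + v \<bullet> ((V - Re_mat W) *v v) + u \<bullet> (Im_mat W *v v) - v \<bullet> (Im_mat W *v u)"
    unfolding quad_sum by (simp only: sum.distrib sum_subtractf)
  finally show ?thesis .
qed



lemma antisym_Im:
  assumes "hermitian_mat W"
  shows "transpose (Im_mat W) = - Im_mat W"
proof -
  have h: "W $ i $ j = cnj (W $ j $ i)" for i j
  proof -
    have "W $ i $ j = adjoint_mat W $ i $ j" using assms by (simp add: hermitian_mat_def)
    also have "\<dots> = cnj (W $ j $ i)" by (simp add: adjoint_mat_def cnj_mat_def transpose_def)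
    finally show ?thesis .
  qed
  have *: "Im (W $ j $ i) = - Im (W $ i $ j)" for i j
    using arg_cong[OF h[of j i], of Im] by simp
  have "transpose (Im_mat W) $ i $ j = (- Im_mat W) $ i $ j" for i j
    using *[of i j] by (simp add: transpose_def Im_mat_def)
  then show ?thesis by (simp add: vec_eq_iff)
qed





theorem lemma3:
  fixes V :: "real^'d^'d" and W :: "complex^'d^'d"
  assumes "symmetric_mat V"
    and "hermitian_mat W"
    and "psd_cmat (cmat_of_rmat V - W)"
  shows "trace V \<ge> trace (Re_mat W) + trace (abs_mat (Im_mat W))"
proof -
  define K where "K = Im_mat W"
  define S where "S = V - Re_mat W"
  have form: "0 \<le> u \<bullet> (S *v u) + v \<bullet> (S *v v) + u \<bullet> (K *v v) - v \<bullet> (K *v u)" for u v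
    using form_ineq[OF assms(3), of u v] by (simp add: S_def K_def)
  have antiK: "transpose K = - K" using antisym_Im[OF assms(2)] by (simp add: K_def)
  have Kt: "transpose K *v y = - (K *v y)" for y
  proof -
    have "transpose K *v y = (- K) *v y" by (simp only: antiK)
    also have "\<dots> = - (K *v y)" by (simp add: vec_eq_iff matrix_vector_mult_def sum_negf)
    finally show ?thesis .
  qed
  define l where "l e = (K *v e) \<bullet> (K *v e)" for e
  obtain E where E: "onset E" "card E = CARD('d)"
    and eigC: "\<And>e. e \<in> E \<Longrightarrow> transpose K *v (K *v e) = l e *\<^sub>R e"
    and tr: "trace (abs_mat K) = (\<Sum>e\<in>E. sqrt (l e))"
    using abs_mat_trace[of K] unfolding l_def by blast
  have fin: "finite E" and ee: "\<And>e. e \<in> E \<Longrightarrow> e \<bullet> e = 1"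
    and orth: "\<And>e f. e \<in> E \<Longrightarrow> f \<in> E \<Longrightarrow> e \<noteq> f \<Longrightarrow> e \<bullet> f = 0"
    using E by (auto simp: onset_def)
  have l0: "l e \<ge> 0" for e by (simp add: l_def)
  have ls: "sqrt (l e) * sqrt (l e) = l e" for e using l0[of e] by simp
  have inT: "x \<bullet> (K *v y) = - ((K *v x) \<bullet> y)" for x y
    using inner_transpose[of x K y] by (simp only: Kt inner_minus_left)
  have KK: "e \<bullet> (K *v (K *v e)) = - l e" for e
    using inT[of e "K *v e"] by (simp add: l_def)
  have Ke0: "K *v e = 0" if "l e = 0" for e using that by (simp add: l_def)
  have cross: "(K *v e) \<bullet> (K *v f) = l f * (e \<bullet> f)" if "f \<in> E" for e f
  proof -
    have "(K *v e) \<bullet> (K *v f) = e \<bullet> (transpose K *v (K *v f))"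
      using inner_transpose[of e "transpose K" "K *v f"] by simp
    also have "\<dots> = l f * (e \<bullet> f)" using eigC[OF that] by simp
    finally show ?thesis .
  qed
  define w where "w e = (if l e > 0 then (1 / sqrt (l e)) *\<^sub>R (K *v e) else e)" for e
  have per: "2 * sqrt (l e) \<le> e \<bullet> (S *v e) + w e \<bullet> (S *v w e)" if e: "e \<in> E" for e
  proof (cases "l e > 0")
    case True
    define c where "c = 1 / sqrt (l e)"
    have we: "w e = c *\<^sub>R (K *v e)" using True by (simp add: w_def c_def)
    have cl: "c * l e = sqrt (l e)" using True ls[of e] by (simp add: c_def field_simps)
    have "0 \<le> e \<bullet> (S *v e) + w e \<bullet> (S *v w e) + e \<bullet> (K *v w e) - w e \<bullet> (K *v e)"
      by (rule form)
    moreover have "e \<bullet> (K *v w e) = - (c * l e)"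
      using KK[of e] by (simp add: we matrix_vector_mult_scaleR)
    moreover have "w e \<bullet> (K *v e) = c * l e" by (simp add: we l_def)
    ultimately show ?thesis using cl by linarith
  next
    case False
    then have "l e = 0" using l0[of e] by linarith
    then have "w e = e" "K *v e = 0" using Ke0 by (auto simp: w_def)
    then show ?thesis using form[of e e] \<open>l e = 0\<close> by simp
  qed
  have wn: "w e \<bullet> w e = 1" if e: "e \<in> E" for e
  proof (cases "l e > 0")
    case True
    then have "w e \<bullet> w e = (1 / sqrt (l e))^2 * l e" by (simp add: w_def l_def power2_eq_square)
    also have "\<dots> = 1" using True by (simp add: power2_eq_square field_simps)
    finally show ?thesis .
  qed (simp add: w_def ee[OF e])
  have wo: "w e \<bullet> w f = 0" if e: "e \<in> E" and f: "f \<in> E" and ef: "e \<noteq> f" for e f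
  proof -
    have o: "e \<bullet> f = 0" "f \<bullet> e = 0" using orth e f ef by auto
    show ?thesis
    proof (cases "l e > 0")
      case Te: True
      show ?thesis
      proof (cases "l f > 0")
        case True
        then show ?thesis using Te cross[OF f, of e] o by (simp add: w_def)
      next
        case False
        then have "l f = 0" using l0[of f] by linarith
        then have "K *v f = 0" by (rule Ke0)
        then show ?thesis using Te False inT[of f e] by (simp add: w_def inner_commute)
      qed
    next
      case Fe: False
      then have "l e = 0" using l0[of e] by linarith
      then have Ke: "K *v e = 0" by (rule Ke0)
      show ?thesis
      proof (cases "l f > 0")
        case True
        then show ?thesis using Fe Ke inT[of e f] by (simp add: w_def)
      next
        case False
        then show ?thesis using Fe o by (simp add: w_def)
      qed
    qed
  qed
  have inj: "inj_on w E"
  proof (rule inj_onI)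
    fix e f assume e: "e \<in> E" and f: "f \<in> E" and eq: "w e = w f"
    show "e = f"
    proof (rule ccontr)
      assume "e \<noteq> f"
      then have "w e \<bullet> w f = 0" using wo e f by blast
      then show False using wn[OF e] eq by simp
    qed
  qed
  have onW: "onset (w ` E)"
    unfolding onset_def using fin wn wo by (auto simp: image_iff)
  have cW: "card (w ` E) = CARD('d)" using card_image[OF inj] E by simp
  have s1: "(\<Sum>e\<in>E. e \<bullet> (S *v e)) = trace S" by (rule onset_trace[OF E])
  have "(\<Sum>b\<in>w ` E. b \<bullet> (S *v b)) = trace S" by (rule onset_trace[OF onW cW])
  then have s2: "(\<Sum>e\<in>E. w e \<bullet> (S *v w e)) = trace S" by (simp add: sum.reindex[OF inj])
  have "2 * (\<Sum>e\<in>E. sqrt (l e)) \<le> (\<Sum>e\<in>E. e \<bullet> (S *v e) + w e \<bullet> (S *v w e))"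
    unfolding sum_distrib_left by (rule sum_mono) (rule per)
  also have "\<dots> = 2 * trace S" using s1 s2 by (simp add: sum.distrib)
  finally have "trace (abs_mat K) \<le> trace S" using tr by simp
  then show ?thesis by (simp add: S_def K_def trace_sub)
qed


end
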